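(* Let $X$ be an $h$-special complex quasi-projective variety, let $S$ be a quasi-projective variety and let $p:X\to S$ be a dominant morphism. Then $S$ is $h$-special.
   Context: For a complex quasi-projective variety $X$, define $x\sim y$ for $x,y\in X$ iff there exist holomorphic maps $f_1,\dots,f_l:\mathbb{C}\to X$ such that, with $Z_i$ the Zariski closure of $f_i(\mathbb{C})$, $x\in Z_1$, $Z_i\cap Z_{i+1}\ne\emptyset$ for $1\le i<l$, and $y\in Z_l$. $X$ is $h$-special iff $\{(x,y)\in X\times X:x\sim y\}$ is Zariski dense in $X\times X$. *)

theory Defs
  imports "HOL-Complex_Analysis.Complex_Analysis"
begin

text \<open>Projective space P^N over the complex numbers, with N+1 = CARD('n).
  A point of P^N is represented as the set of nonzero multiples of a
  nonzero vector of complex^'n (a punctured line).\<close>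

definition proj_pt :: "complex^'n \<Rightarrow> (complex^'n) set" where
  "proj_pt v = {c *s v | c. c \<noteq> 0}"

definition proj_space :: "(complex^'n) set set" where
  "proj_space = {proj_pt v | v. v \<noteq> 0}"

inductive_set polyfun :: "('a \<Rightarrow> complex) set \<Rightarrow> ('a \<Rightarrow> complex) set"
  for C :: "('a \<Rightarrow> complex) set" where
  const: "(\<lambda>_. c) \<in> polyfun C"
| coord: "g \<in> C \<Longrightarrow> g \<in> polyfun C"
| add: "f \<in> polyfun C \<Longrightarrow> g \<in> polyfun C \<Longrightarrow> (\<lambda>x. f x + g x) \<in> polyfun C"
| mult: "f \<in> polyfun C \<Longrightarrow> g \<in> polyfun C \<Longrightarrow> (\<lambda>x. f x * g x) \<in> polyfun C"

definition hom_poly :: "nat \<Rightarrow> (complex^'n \<Rightarrow> complex) \<Rightarrow> bool" where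
  "hom_poly d f \<longleftrightarrow> f \<in> polyfun (range (\<lambda>i v. vec_nth v i)) \<and>
     (\<forall>c v. f (c *s v) = c ^ d * f v)"

definition bihom_poly :: "nat \<Rightarrow> nat \<Rightarrow> ((complex^'n) \<times> (complex^'n) \<Rightarrow> complex) \<Rightarrow> bool" where
  "bihom_poly d e f \<longleftrightarrow>
     f \<in> polyfun (range (\<lambda>i (v, w). vec_nth v i) \<union> range (\<lambda>i (v, w). vec_nth w i)) \<and>
     (\<forall>c c' v w. f (c *s v, c' *s w) = c ^ d * c' ^ e * f (v, w))"

definition zariski_closed :: "(complex^'n) set set \<Rightarrow> bool" where
  "zariski_closed Z \<longleftrightarrow> (\<exists>F. (\<forall>f\<in>F. \<exists>d. hom_poly d f) \<and>
     Z = {P \<in> proj_space. \<forall>f\<in>F. \<forall>v\<in>P. f v = 0})"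

definition zariski_closed2 :: "((complex^'n) set \<times> (complex^'n) set) set \<Rightarrow> bool" where
  "zariski_closed2 Z \<longleftrightarrow> (\<exists>F. (\<forall>f\<in>F. \<exists>d e. bihom_poly d e f) \<and>
     Z = {(P, Q) \<in> proj_space \<times> proj_space. \<forall>f\<in>F. \<forall>v\<in>P. \<forall>w\<in>Q. f (v, w) = 0})"

definition quasi_projective :: "(complex^'n) set set \<Rightarrow> bool" where
  "quasi_projective X \<longleftrightarrow> (\<exists>Z1 Z2. zariski_closed Z1 \<and> zariski_closed Z2 \<and> X = Z1 - Z2)"

definition rel_closed :: "(complex^'n) set set \<Rightarrow> (complex^'n) set set \<Rightarrow> bool" where
  "rel_closed X A \<longleftrightarrow> (\<exists>Z. zariski_closed Z \<and> A = X \<inter> Z)"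

definition qp_variety :: "(complex^'n) set set \<Rightarrow> bool" where
  "qp_variety X \<longleftrightarrow> quasi_projective X \<and> X \<noteq> {} \<and>
     (\<forall>A B. rel_closed X A \<and> rel_closed X B \<and> X = A \<union> B \<longrightarrow> A = X \<or> B = X)"

definition zclosure :: "(complex^'n) set set \<Rightarrow> (complex^'n) set set \<Rightarrow> (complex^'n) set set" where
  "zclosure X A = X \<inter> \<Inter>{Z. zariski_closed Z \<and> A \<subseteq> Z}"

definition holo_curve :: "(complex^'n) set set \<Rightarrow> (complex \<Rightarrow> (complex^'n) set) \<Rightarrow> bool" where
  "holo_curve X f \<longleftrightarrow> (\<forall>t. f t \<in> X) \<and>
     (\<forall>t0. \<exists>U g. open U \<and> t0 \<in> U \<and> (\<forall>i. (\<lambda>t. vec_nth (g t) i) holomorphic_on U) \<and>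
        (\<forall>t\<in>U. g t \<noteq> 0 \<and> f t = proj_pt (g t)))"

definition h_equiv :: "(complex^'n) set set \<Rightarrow> (complex^'n) set \<Rightarrow> (complex^'n) set \<Rightarrow> bool" where
  "h_equiv X x y \<longleftrightarrow> (\<exists>fs. fs \<noteq> [] \<and> (\<forall>f\<in>set fs. holo_curve X f) \<and>
     x \<in> zclosure X (range (hd fs)) \<and> y \<in> zclosure X (range (last fs)) \<and>
     (\<forall>i. Suc i < length fs \<longrightarrow>
        zclosure X (range (fs ! i)) \<inter> zclosure X (range (fs ! Suc i)) \<noteq> {}))"

definition h_special :: "(complex^'n) set set \<Rightarrow> bool" where
  "h_special X \<longleftrightarrow> (\<forall>Z. zariski_closed2 Z \<and>
     {(x, y). x \<in> X \<and> y \<in> X \<and> h_equiv X x y} \<subseteq> Z \<longrightarrow> X \<times> X \<subseteq> Z)"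

definition qp_morphism :: "(complex^'n) set set \<Rightarrow> (complex^'m) set set
    \<Rightarrow> ((complex^'n) set \<Rightarrow> (complex^'m) set) \<Rightarrow> bool" where
  "qp_morphism X S p \<longleftrightarrow> (\<forall>x\<in>X. p x \<in> S) \<and>
     (\<forall>x\<in>X. \<exists>d g Z. zariski_closed Z \<and> x \<notin> Z \<and> (\<forall>j. hom_poly d (\<lambda>v. vec_nth (g v) j)) \<and>
        (\<forall>y\<in>X - Z. \<forall>v\<in>y. g v \<noteq> 0 \<and> p y = proj_pt (g v)))"

definition dominant :: "(complex^'n) set set \<Rightarrow> (complex^'m) set set
    \<Rightarrow> ((complex^'n) set \<Rightarrow> (complex^'m) set) \<Rightarrow> bool" where
  "dominant X S p \<longleftrightarrow> (\<forall>Z. zariski_closed Z \<and> p ` X \<subseteq> Z \<longrightarrow> S \<subseteq> Z)"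

end

theory Submission
  imports Defs
begin

lemma polyfun_comp:
  assumes "f \<in> polyfun C" "\<forall>c\<in>C. (\<lambda>x. c (\<phi> x)) \<in> polyfun D"
  shows "(\<lambda>x. f (\<phi> x)) \<in> polyfun D"
  using assms(1)
proof induct
  case (const c) then show ?case by (rule polyfun.const)
next
  case (coord g) then show ?case using assms(2) by blast
next
  case (add f g) from add(2,4) show ?case by (rule polyfun.add)
next
  case (mult f g) from mult(2,4) show ?case by (rule polyfun.mult)
qed

lemma polyfun_holo:
  assumes "f \<in> polyfun C" "\<forall>c\<in>C. (\<lambda>t. c (\<phi> t)) holomorphic_on U"
  shows "(\<lambda>t. f (\<phi> t)) holomorphic_on U"
  using assms(1)
proof induct
  case (const c) then show ?case by simp
next
  case (coord g) then show ?case using assms(2) by blast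
next
  case (add f g) then show ?case by (intro holomorphic_intros)
next
  case (mult f g) then show ?case by (intro holomorphic_intros)
qed

lemma in_proj_pt_self: "v \<in> proj_pt v"
  unfolding proj_pt_def by (auto intro!: exI[of _ 1])

lemma proj_pt_memD: "w \<in> proj_pt v \<Longrightarrow> \<exists>c. c \<noteq> 0 \<and> w = c *s v"
  unfolding proj_pt_def by auto

lemma proj_space_ne: "P \<in> proj_space \<Longrightarrow> P \<noteq> {}"
  unfolding proj_space_def using in_proj_pt_self by blast

lemma hom_poly_smult: "hom_poly d f \<Longrightarrow> f (c *s v) = c^d * f v"
  by (simp add: hom_poly_def)

lemma hom_vec: "(\<forall>j. hom_poly d (\<lambda>v. G v $ j)) \<Longrightarrow> G (c *s v) = c^d *s G v"
  by (simp add: vec_eq_iff hom_poly_def)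

lemma zc_proj: "zariski_closed Z \<Longrightarrow> Z \<subseteq> proj_space"
  unfolding zariski_closed_def by auto

lemma qp_proj: "quasi_projective X \<Longrightarrow> X \<subseteq> proj_space"
  unfolding quasi_projective_def using zc_proj by blast

lemma hom_nonzero:
  assumes "hom_poly d h" "P \<in> proj_space" "v0 \<in> P" "h v0 \<noteq> 0" "v \<in> P"
  shows "h v \<noteq> 0"
proof -
  obtain u where u: "P = proj_pt u" using assms(2) unfolding proj_space_def by auto
  obtain c0 where c0: "c0 \<noteq> 0" "v0 = c0 *s u" using proj_pt_memD assms(3) u by blast
  obtain c where c: "c \<noteq> 0" "v = c *s u" using proj_pt_memD assms(5) u by blast
  have "v = (c / c0) *s v0" using c c0 by (simp add: vector_smult_assoc)
  then have "h v = (c/c0)^d * h v0" using hom_poly_smult[OF assms(1)] by simp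
  then show ?thesis using c c0 assms(4) by simp
qed

lemma polyfun_fst:
  assumes "h \<in> polyfun (range (\<lambda>i v. vec_nth v i))"
  shows "(\<lambda>x. h (fst x)) \<in> polyfun (range (\<lambda>i (v::complex^'n, w::complex^'n). vec_nth v i) \<union> range (\<lambda>i (v, w). vec_nth w i))"
proof (rule polyfun_comp[OF assms], rule ballI)
  fix c assume "c \<in> range (\<lambda>i v. vec_nth (v::complex^'n) i)"
  then obtain i where "c = (\<lambda>v. v $ i)" by auto
  then have "(\<lambda>x. c (fst x)) = (\<lambda>(v::complex^'n, w::complex^'n). v $ i)" by auto
  then show "(\<lambda>x. c (fst x)) \<in> polyfun (range (\<lambda>i (v::complex^'n, w::complex^'n). vec_nth v i) \<union> range (\<lambda>i (v, w). vec_nth w i))"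
    by (auto intro: polyfun.coord)
qed

lemma polyfun_snd:
  assumes "h \<in> polyfun (range (\<lambda>i v. vec_nth v i))"
  shows "(\<lambda>x. h (snd x)) \<in> polyfun (range (\<lambda>i (v::complex^'n, w::complex^'n). vec_nth v i) \<union> range (\<lambda>i (v, w). vec_nth w i))"
proof (rule polyfun_comp[OF assms], rule ballI)
  fix c assume "c \<in> range (\<lambda>i v. vec_nth (v::complex^'n) i)"
  then obtain i where "c = (\<lambda>v. v $ i)" by auto
  then have "(\<lambda>x. c (snd x)) = (\<lambda>(v::complex^'n, w::complex^'n). w $ i)" by auto
  then show "(\<lambda>x. c (snd x)) \<in> polyfun (range (\<lambda>i (v::complex^'n, w::complex^'n). vec_nth v i) \<union> range (\<lambda>i (v, w). vec_nth w i))"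
    by (auto intro: polyfun.coord)
qed



lemma slice1:
  assumes "zariski_closed2 Z" "Q \<in> proj_space"
  shows "zariski_closed {P \<in> proj_space. (P, Q) \<in> Z}"
proof -
  obtain F where F: "\<forall>f\<in>F. \<exists>d e. bihom_poly d e f"
    "Z = {(P, Q) \<in> proj_space \<times> proj_space. \<forall>f\<in>F. \<forall>v\<in>P. \<forall>w\<in>Q. f (v, w) = 0}"
    using assms(1) unfolding zariski_closed2_def by blast
  define F' where "F' = {\<lambda>v. f (v, w) | f w. f \<in> F \<and> w \<in> Q}"
  have "\<forall>f'\<in>F'. \<exists>d. hom_poly d f'"
  proof
    fix f' assume "f' \<in> F'"
    then obtain f w where fw: "f \<in> F" "w \<in> Q" "f' = (\<lambda>v. f (v, w))" unfolding F'_def by blast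
    obtain d e where de: "bihom_poly d e f" using F(1) fw(1) by blast
    have "(\<lambda>v. f (v, w)) \<in> polyfun (range (\<lambda>i v. vec_nth v i))"
    proof (rule polyfun_comp[where \<phi>="\<lambda>v. (v, w)"])
      show "f \<in> polyfun (range (\<lambda>i (v, w). vec_nth v i) \<union> range (\<lambda>i (v, w). vec_nth w i))"
        using de unfolding bihom_poly_def by blast
    next
      show "\<forall>c\<in>range (\<lambda>i (v, w). vec_nth v i) \<union> range (\<lambda>i (v, w). vec_nth w i).
          (\<lambda>x. c (x, w)) \<in> polyfun (range (\<lambda>i v. vec_nth v i))"
        by (auto intro: polyfun.coord polyfun.const)
    qed
    moreover have "\<forall>c v. f (c *s v, w) = c ^ d * f (v, w)"
    proof (intro allI)
      fix c v
      have "f (c *s v, (1::complex) *s w) = c ^ d * 1 ^ e * f (v, w)"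
        using de unfolding bihom_poly_def by blast
      then show "f (c *s v, w) = c ^ d * f (v, w)" by simp
    qed
    ultimately show "\<exists>d. hom_poly d f'" using fw(3) unfolding hom_poly_def by auto
  qed
  moreover have "{P \<in> proj_space. (P, Q) \<in> Z} = {P \<in> proj_space. \<forall>f\<in>F'. \<forall>v\<in>P. f v = 0}"
    using assms(2) unfolding F(2) F'_def by auto
  ultimately show ?thesis unfolding zariski_closed_def by blast
qed

lemma slice2:
  assumes "zariski_closed2 Z" "P \<in> proj_space"
  shows "zariski_closed {Q \<in> proj_space. (P, Q) \<in> Z}"
proof -
  obtain F where F: "\<forall>f\<in>F. \<exists>d e. bihom_poly d e f"
    "Z = {(P, Q) \<in> proj_space \<times> proj_space. \<forall>f\<in>F. \<forall>v\<in>P. \<forall>w\<in>Q. f (v, w) = 0}"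
    using assms(1) unfolding zariski_closed2_def by blast
  define F' where "F' = {\<lambda>w. f (v, w) | f v. f \<in> F \<and> v \<in> P}"
  have "\<forall>f'\<in>F'. \<exists>d. hom_poly d f'"
  proof
    fix f' assume "f' \<in> F'"
    then obtain f v where fw: "f \<in> F" "v \<in> P" "f' = (\<lambda>w. f (v, w))" unfolding F'_def by blast
    obtain d e where de: "bihom_poly d e f" using F(1) fw(1) by blast
    have "(\<lambda>w. f (v, w)) \<in> polyfun (range (\<lambda>i v. vec_nth v i))"
    proof (rule polyfun_comp[where \<phi>="\<lambda>w. (v, w)"])
      show "f \<in> polyfun (range (\<lambda>i (v, w). vec_nth v i) \<union> range (\<lambda>i (v, w). vec_nth w i))"
        using de unfolding bihom_poly_def by blast
    next
      show "\<forall>c\<in>range (\<lambda>i (v, w). vec_nth v i) \<union> range (\<lambda>i (v, w). vec_nth w i).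
          (\<lambda>x. c (v, x)) \<in> polyfun (range (\<lambda>i v. vec_nth v i))"
        by (auto intro: polyfun.coord polyfun.const)
    qed
    moreover have "\<forall>c w. f (v, c *s w) = c ^ e * f (v, w)"
    proof (intro allI)
      fix c w
      have "f ((1::complex) *s v, c *s w) = 1 ^ d * c ^ e * f (v, w)"
        using de unfolding bihom_poly_def by blast
      then show "f (v, c *s w) = c ^ e * f (v, w)" by simp
    qed
    ultimately show "\<exists>d. hom_poly d f'" using fw(3) unfolding hom_poly_def by auto
  qed
  moreover have "{Q \<in> proj_space. (P, Q) \<in> Z} = {Q \<in> proj_space. \<forall>f\<in>F'. \<forall>v\<in>Q. f v = 0}"
    using assms(2) unfolding F(2) F'_def by auto
  ultimately show ?thesis unfolding zariski_closed_def by blast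
qed

lemma prod_closed:
  fixes Z :: "(complex^'n) set set"
  assumes "zariski_closed Z"
  shows "zariski_closed2 (Z \<times> proj_space)"
proof -
  obtain H where H: "\<forall>h\<in>H. \<exists>d. hom_poly d h" "Z = {P \<in> proj_space. \<forall>h\<in>H. \<forall>v\<in>P. h v = 0}"
    using assms unfolding zariski_closed_def by blast
  define F :: "((complex^'n) \<times> (complex^'n) \<Rightarrow> complex) set" where "F = {\<lambda>x. h (fst x) | h. h \<in> H}"
  have "\<forall>f\<in>F. \<exists>d e. bihom_poly d e f"
  proof
    fix f assume "f \<in> F"
    then obtain h where h: "h \<in> H" "f = (\<lambda>x. h (fst x))" unfolding F_def by blast
    obtain d where d: "hom_poly d h" using H(1) h(1) by blast
    have "bihom_poly d 0 f" unfolding bihom_poly_def h(2)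
      using polyfun_fst[of h] d unfolding hom_poly_def by auto
    then show "\<exists>d e. bihom_poly d e f" by blast
  qed
  moreover have "Z \<times> proj_space = {(P, Q) \<in> proj_space \<times> proj_space. \<forall>f\<in>F. \<forall>v\<in>P. \<forall>w\<in>Q. f (v, w) = 0}"
    unfolding H(2) F_def using proj_space_ne by fastforce
  ultimately show ?thesis unfolding zariski_closed2_def by blast
qed



lemma choice3: "\<forall>x\<in>X. \<exists>a b c. P x a b c \<Longrightarrow> \<exists>A B C. \<forall>x\<in>X. P x (A x) (B x) (C x)"
  by metis

lemma choice1: "\<forall>x\<in>X. \<exists>a. P x a \<Longrightarrow> \<exists>A. \<forall>x\<in>X. P x (A x)"
  by metis

lemma preimage2:
  fixes X :: "(complex^'n) set set" and S :: "(complex^'m) set set"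
    and p :: "(complex^'n) set \<Rightarrow> (complex^'m) set"
    and Z :: "((complex^'m) set \<times> (complex^'m) set) set"
  assumes mor: "qp_morphism X S p" and XP: "X \<subseteq> proj_space" and SP: "S \<subseteq> proj_space"
    and Zc: "zariski_closed2 Z"
  shows "\<exists>Z'. zariski_closed2 Z' \<and> (\<forall>P\<in>X. \<forall>Q\<in>X. (P, Q) \<in> Z' \<longleftrightarrow> (p P, p Q) \<in> Z)"
proof -
  have "\<forall>x\<in>X. \<exists>d g Z. zariski_closed Z \<and> x \<notin> Z \<and> (\<forall>j. hom_poly d (\<lambda>v. vec_nth (g v) j)) \<and>
        (\<forall>y\<in>X - Z. \<forall>v\<in>y. g v \<noteq> 0 \<and> p y = proj_pt (g v))"
    using mor unfolding qp_morphism_def by blast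
  then obtain dd GG ZZ where ch0: "\<forall>x\<in>X. zariski_closed (ZZ x) \<and> x \<notin> ZZ x \<and>
       (\<forall>j. hom_poly (dd x) (\<lambda>v. vec_nth (GG x v) j)) \<and>
        (\<forall>y\<in>X - ZZ x. \<forall>v\<in>y. GG x v \<noteq> 0 \<and> p y = proj_pt (GG x v))"
    by (elim choice3[elim_format] exE) blast
  note ch = bspec[OF ch0]
  have "\<forall>x\<in>X. \<exists>H. (\<forall>h\<in>H. \<exists>d. hom_poly d h) \<and> ZZ x = {P \<in> proj_space. \<forall>h\<in>H. \<forall>v\<in>P. h v = 0}"
    using ch unfolding zariski_closed_def by blast
  then obtain HH where HH0: "\<forall>x\<in>X. (\<forall>h\<in>HH x. \<exists>d. hom_poly d h) \<and>
      ZZ x = {P \<in> proj_space. \<forall>h\<in>HH x. \<forall>v\<in>P. h v = 0}"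
    by (elim choice1[elim_format] exE) blast
  note HH = bspec[OF HH0]
  obtain F where F: "\<forall>f\<in>F. \<exists>d e. bihom_poly d e f"
    "Z = {(P, Q) \<in> proj_space \<times> proj_space. \<forall>f\<in>F. \<forall>v\<in>P. \<forall>w\<in>Q. f (v, w) = 0}"
    using Zc unfolding zariski_closed2_def by blast
  define F'' :: "((complex^'n) \<times> (complex^'n) \<Rightarrow> complex) set" where
    "F'' = {\<lambda>x. h1 (fst x) * f (GG x1 (fst x), GG x2 (snd x)) * h2 (snd x) | x1 x2 h1 h2 f.
       x1 \<in> X \<and> x2 \<in> X \<and> h1 \<in> HH x1 \<and> h2 \<in> HH x2 \<and> f \<in> F}"
  define Z' where "Z' = {(P, Q) \<in> proj_space \<times> proj_space. \<forall>f\<in>F''. \<forall>v\<in>P. \<forall>w\<in>Q. f (v, w) = 0}"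
  have bih: "\<forall>f\<in>F''. \<exists>d e. bihom_poly d e f"
  proof
    fix ff assume "ff \<in> F''"
    then obtain x1 x2 h1 h2 f where xx: "x1 \<in> X" "x2 \<in> X" "h1 \<in> HH x1" "h2 \<in> HH x2" "f \<in> F"
      and ff: "ff = (\<lambda>x. h1 (fst x) * f (GG x1 (fst x), GG x2 (snd x)) * h2 (snd x))"
      unfolding F''_def by blast
    obtain a where a: "hom_poly a h1" using HH xx by blast
    obtain b where b: "hom_poly b h2" using HH xx by blast
    obtain d e where de: "bihom_poly d e f" using F(1) xx by blast
    have G1: "\<forall>j. hom_poly (dd x1) (\<lambda>v. vec_nth (GG x1 v) j)" using ch xx by blast
    have G2: "\<forall>j. hom_poly (dd x2) (\<lambda>v. vec_nth (GG x2 v) j)" using ch xx by blast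
    let ?C = "range (\<lambda>i (v::complex^'n, w::complex^'n). vec_nth v i) \<union> range (\<lambda>i (v, w). vec_nth w i)"
    have p1: "(\<lambda>x. h1 (fst x)) \<in> polyfun ?C" using polyfun_fst a unfolding hom_poly_def by blast
    have p2: "(\<lambda>x. h2 (snd x)) \<in> polyfun ?C" using polyfun_snd b unfolding hom_poly_def by blast
    have p3: "(\<lambda>x. f (GG x1 (fst x), GG x2 (snd x))) \<in> polyfun ?C"
    proof (rule polyfun_comp[where \<phi>="\<lambda>x. (GG x1 (fst x), GG x2 (snd x))"])
      show "f \<in> polyfun (range (\<lambda>i (v, w). vec_nth v i) \<union> range (\<lambda>i (v, w). vec_nth w i))"
        using de unfolding bihom_poly_def by blast
    next
      show "\<forall>c\<in>range (\<lambda>i (v, w). vec_nth v i) \<union> range (\<lambda>i (v, w). vec_nth w i).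
          (\<lambda>x. c (GG x1 (fst x), GG x2 (snd x))) \<in> polyfun ?C"
      proof
        fix c :: "(complex^'m) \<times> (complex^'m) \<Rightarrow> complex"
        assume "c \<in> range (\<lambda>i (v, w). vec_nth v i) \<union> range (\<lambda>i (v, w). vec_nth w i)"
        then obtain i where "c = (\<lambda>(v, w). vec_nth v i) \<or> c = (\<lambda>(v, w). vec_nth w i)" by blast
        then show "(\<lambda>x. c (GG x1 (fst x), GG x2 (snd x))) \<in> polyfun ?C"
        proof
          assume "c = (\<lambda>(v, w). vec_nth v i)"
          then show ?thesis using polyfun_fst[of "\<lambda>v. vec_nth (GG x1 v) i"] G1 unfolding hom_poly_def by auto
        next
          assume "c = (\<lambda>(v, w). vec_nth w i)"
          then show ?thesis using polyfun_snd[of "\<lambda>v. vec_nth (GG x2 v) i"] G2 unfolding hom_poly_def by auto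
        qed
      qed
    qed
    have "ff \<in> polyfun ?C" unfolding ff
      by (intro polyfun.mult p1 p2 p3)
    moreover have "\<forall>c c' v w. ff (c *s v, c' *s w) = c ^ (a + dd x1 * d) * c' ^ (dd x2 * e + b) * ff (v, w)"
    proof (intro allI)
      fix c c' v w
      have "f (c ^ dd x1 *s GG x1 v, c' ^ dd x2 *s GG x2 w) = (c ^ dd x1) ^ d * (c' ^ dd x2) ^ e * f (GG x1 v, GG x2 w)"
        using de unfolding bihom_poly_def by blast
      then show "ff (c *s v, c' *s w) = c ^ (a + dd x1 * d) * c' ^ (dd x2 * e + b) * ff (v, w)"
        unfolding ff using hom_vec[OF G1] hom_vec[OF G2] hom_poly_smult[OF a] hom_poly_smult[OF b]
        by (simp add: power_add power_mult)
    qed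
    ultimately show "\<exists>d e. bihom_poly d e ff" unfolding bihom_poly_def by blast
  qed
  have eq: "(P, Q) \<in> Z' \<longleftrightarrow> (p P, p Q) \<in> Z" if PQ: "P \<in> X" "Q \<in> X" for P Q
  proof
    assume "(p P, p Q) \<in> Z"
    then have Z1: "\<forall>f\<in>F. \<forall>v\<in>p P. \<forall>w\<in>p Q. f (v, w) = 0" unfolding F(2) by blast
    have "\<forall>f\<in>F''. \<forall>v\<in>P. \<forall>w\<in>Q. f (v, w) = 0"
    proof (intro ballI)
      fix ff v w assume "ff \<in> F''" "v \<in> P" "w \<in> Q"
      then obtain x1 x2 h1 h2 f where xx: "x1 \<in> X" "x2 \<in> X" "h1 \<in> HH x1" "h2 \<in> HH x2" "f \<in> F"
        and ff: "ff = (\<lambda>x. h1 (fst x) * f (GG x1 (fst x), GG x2 (snd x)) * h2 (snd x))"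
        unfolding F''_def by blast
      show "ff (v, w) = 0"
      proof (cases "P \<in> ZZ x1")
        case True
        then have "h1 v = 0" using HH[OF xx(1)] xx(3) \<open>v \<in> P\<close> by blast
        then show ?thesis unfolding ff by simp
      next
        case n1: False
        show ?thesis
        proof (cases "Q \<in> ZZ x2")
          case True
          then have "h2 w = 0" using HH[OF xx(2)] xx(4) \<open>w \<in> Q\<close> by blast
          then show ?thesis unfolding ff by simp
        next
          case n2: False
          have "p P = proj_pt (GG x1 v)" using ch[OF xx(1)] n1 PQ \<open>v \<in> P\<close> by blast
          then have "GG x1 v \<in> p P" using in_proj_pt_self by metis
          moreover have "p Q = proj_pt (GG x2 w)" using ch[OF xx(2)] n2 PQ \<open>w \<in> Q\<close> by blast
          then have "GG x2 w \<in> p Q" using in_proj_pt_self by metis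
          ultimately have "f (GG x1 v, GG x2 w) = 0" using Z1 xx(5) by blast
          then show ?thesis unfolding ff by simp
        qed
      qed
    qed
    then show "(P, Q) \<in> Z'" unfolding Z'_def using PQ XP by blast
  next
    assume "(P, Q) \<in> Z'"
    then have Z1: "\<forall>f\<in>F''. \<forall>v\<in>P. \<forall>w\<in>Q. f (v, w) = 0" unfolding Z'_def by blast
    have PP: "P \<in> proj_space" "Q \<in> proj_space" using PQ XP by auto
    have nP: "P \<notin> ZZ P" and nQ: "Q \<notin> ZZ Q" using ch PQ by blast+
    obtain h1 v0 where h1: "h1 \<in> HH P" "v0 \<in> P" "h1 v0 \<noteq> 0" using nP HH[OF PQ(1)] PP by blast
    obtain h2 w0 where h2: "h2 \<in> HH Q" "w0 \<in> Q" "h2 w0 \<noteq> 0" using nQ HH[OF PQ(2)] PP by blast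
    have pP: "p P = proj_pt (GG P v0)" using ch[OF PQ(1)] nP PQ h1 by blast
    have pQ: "p Q = proj_pt (GG Q w0)" using ch[OF PQ(2)] nQ PQ h2 by blast
    have "\<forall>f\<in>F. \<forall>v\<in>p P. \<forall>w\<in>p Q. f (v, w) = 0"
    proof (intro ballI)
      fix f v w assume f: "f \<in> F" and v: "v \<in> p P" and w: "w \<in> p Q"
      have "(\<lambda>x. h1 (fst x) * f (GG P (fst x), GG Q (snd x)) * h2 (snd x)) \<in> F''"
        unfolding F''_def using PQ h1 h2 f by blast
      then have "h1 v0 * f (GG P v0, GG Q w0) * h2 w0 = 0" using Z1 h1 h2 by force
      then have f0: "f (GG P v0, GG Q w0) = 0" using h1 h2 by simp
      obtain c where c: "v = c *s GG P v0" using proj_pt_memD v pP by metis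
      obtain c' where c': "w = c' *s GG Q w0" using proj_pt_memD w pQ by metis
      obtain d e where de: "bihom_poly d e f" using F(1) f by blast
      show "f (v, w) = 0" using de f0 unfolding c c' bihom_poly_def by simp
    qed
    moreover have "p P \<in> proj_space" "p Q \<in> proj_space" using mor PQ SP unfolding qp_morphism_def by blast+
    ultimately show "(p P, p Q) \<in> Z" unfolding F(2) by blast
  qed
  have "zariski_closed2 Z'" unfolding zariski_closed2_def Z'_def using bih by blast
  then show ?thesis using eq by blast
qed



lemma holo_image:
  fixes X :: "(complex^'n) set set" and S :: "(complex^'m) set set"
    and p :: "(complex^'n) set \<Rightarrow> (complex^'m) set"
  assumes mor: "qp_morphism X S p" and XP: "X \<subseteq> proj_space" and hf: "holo_curve X f"
  shows "holo_curve S (p \<circ> f)"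
  unfolding holo_curve_def
proof (intro conjI allI)
  fix t show "(p \<circ> f) t \<in> S" using mor hf unfolding qp_morphism_def holo_curve_def by auto
next
  fix t0
  have ft0: "f t0 \<in> X" using hf unfolding holo_curve_def by blast
  obtain U g where Ug: "open U" "t0 \<in> U" "\<forall>i. (\<lambda>t. vec_nth (g t) i) holomorphic_on U"
    "\<forall>t\<in>U. g t \<noteq> 0 \<and> f t = proj_pt (g t)"
    using hf unfolding holo_curve_def by blast
  obtain d G Zc where ch: "zariski_closed Zc" "f t0 \<notin> Zc" "\<forall>j. hom_poly d (\<lambda>v. vec_nth (G v) j)"
    "\<forall>y\<in>X - Zc. \<forall>v\<in>y. G v \<noteq> 0 \<and> p y = proj_pt (G v)"
    using mor ft0 unfolding qp_morphism_def by blast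
  obtain H where H: "\<forall>h\<in>H. \<exists>d. hom_poly d h" "Zc = {P \<in> proj_space. \<forall>h\<in>H. \<forall>v\<in>P. h v = 0}"
    using ch(1) unfolding zariski_closed_def by blast
  have "f t0 \<in> proj_space" using ft0 XP by blast
  then obtain h v0 where h: "h \<in> H" "v0 \<in> f t0" "h v0 \<noteq> 0" using ch(2) H(2) by blast
  obtain k where k: "hom_poly k h" using H(1) h(1) by blast
  have "f t0 = proj_pt (g t0)" using Ug(2,4) by blast
  then have gt0: "g t0 \<in> f t0" by (simp add: in_proj_pt_self)
  have hg0: "h (g t0) \<noteq> 0" using hom_nonzero[OF k \<open>f t0 \<in> proj_space\<close> h(2) h(3) gt0] .
  have coordsH: "\<forall>c\<in>range (\<lambda>i v. vec_nth v i). (\<lambda>t. c (g t)) holomorphic_on U"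
    using Ug(3) by auto
  have hol: "(\<lambda>t. h (g t)) holomorphic_on U"
    using polyfun_holo[OF _ coordsH] k unfolding hom_poly_def by blast
  define U' where "U' = U \<inter> (\<lambda>t. h (g t)) -` (- {0})"
  have oU': "open U'" unfolding U'_def
    by (rule continuous_open_preimage[OF holomorphic_on_imp_continuous_on[OF hol] Ug(1)]) auto
  have t0U': "t0 \<in> U'" unfolding U'_def using Ug(2) hg0 by auto
  have hol': "\<forall>j. (\<lambda>t. vec_nth (G (g t)) j) holomorphic_on U'"
  proof
    fix j
    have "(\<lambda>t. vec_nth (G (g t)) j) holomorphic_on U"
      using polyfun_holo[OF _ coordsH, of "\<lambda>v. vec_nth (G v) j"] ch(3) unfolding hom_poly_def by blast
    then show "(\<lambda>t. vec_nth (G (g t)) j) holomorphic_on U'" by (rule holomorphic_on_subset) (auto simp: U'_def)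
  qed
  have eqs: "\<forall>t\<in>U'. G (g t) \<noteq> 0 \<and> (p \<circ> f) t = proj_pt (G (g t))"
  proof
    fix t assume t: "t \<in> U'"
    then have tU: "t \<in> U" and hne: "h (g t) \<noteq> 0" unfolding U'_def by auto
    have "f t = proj_pt (g t)" using Ug(4) tU by blast
    then have gt: "g t \<in> f t" by (simp add: in_proj_pt_self)
    have "f t \<notin> Zc" using H(2) h(1) gt hne by blast
    moreover have "f t \<in> X" using hf unfolding holo_curve_def by blast
    ultimately have ftX: "f t \<in> X - Zc" by blast
    have "G (g t) \<noteq> 0 \<and> p (f t) = proj_pt (G (g t))" using bspec[OF bspec[OF ch(4) ftX] gt] .
    then show "G (g t) \<noteq> 0 \<and> (p \<circ> f) t = proj_pt (G (g t))" by simp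
  qed
  show "\<exists>U g. open U \<and> t0 \<in> U \<and> (\<forall>i. (\<lambda>t. vec_nth (g t) i) holomorphic_on U) \<and>
        (\<forall>t\<in>U. g t \<noteq> 0 \<and> (p \<circ> f) t = proj_pt (g t))"
    by (rule exI[of _ U'], rule exI[of _ "\<lambda>t. G (g t)"]) (use oU' t0U' hol' eqs in blast)
qed



lemma preimage1:
  fixes X :: "(complex^'n) set set" and S :: "(complex^'m) set set"
    and p :: "(complex^'n) set \<Rightarrow> (complex^'m) set"
  assumes mor: "qp_morphism X S p" and XP: "X \<subseteq> proj_space" and SP: "S \<subseteq> proj_space"
    and Xne: "X \<noteq> {}" and Zc: "zariski_closed Z"
  shows "\<exists>Z'. zariski_closed Z' \<and> (\<forall>P\<in>X. P \<in> Z' \<longleftrightarrow> p P \<in> Z)"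
proof -
  obtain Z'' where Z'': "zariski_closed2 Z''"
    "\<forall>P\<in>X. \<forall>Q\<in>X. (P, Q) \<in> Z'' \<longleftrightarrow> (p P, p Q) \<in> Z \<times> proj_space"
    using preimage2[OF mor XP SP prod_closed[OF Zc]] by blast
  obtain Q0 where Q0: "Q0 \<in> X" using Xne by blast
  have pQ0: "p Q0 \<in> proj_space" using mor Q0 SP unfolding qp_morphism_def by blast
  have "zariski_closed {P \<in> proj_space. (P, Q0) \<in> Z''}" using slice1[OF Z''(1)] Q0 XP by blast
  moreover have "\<forall>P\<in>X. P \<in> {P \<in> proj_space. (P, Q0) \<in> Z''} \<longleftrightarrow> p P \<in> Z"
    using Z''(2) Q0 pQ0 XP by blast
  ultimately show ?thesis by blast
qed

lemma zclosure_map: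
  fixes X :: "(complex^'n) set set" and S :: "(complex^'m) set set"
    and p :: "(complex^'n) set \<Rightarrow> (complex^'m) set"
  assumes mor: "qp_morphism X S p" and XP: "X \<subseteq> proj_space" and SP: "S \<subseteq> proj_space"
    and AX: "A \<subseteq> X" and x: "x \<in> zclosure X A"
  shows "p x \<in> zclosure S (p ` A)"
proof -
  have xX: "x \<in> X" and xZ: "\<And>Z. zariski_closed Z \<Longrightarrow> A \<subseteq> Z \<Longrightarrow> x \<in> Z"
    using x unfolding zclosure_def by auto
  have "p x \<in> S" using mor xX unfolding qp_morphism_def by blast
  moreover have "p x \<in> Z" if Z: "zariski_closed Z" "p ` A \<subseteq> Z" for Z
  proof -
    obtain Z' where Z': "zariski_closed Z'" "\<forall>P\<in>X. P \<in> Z' \<longleftrightarrow> p P \<in> Z"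
      using preimage1[OF mor XP SP _ Z(1)] xX by blast
    have "A \<subseteq> Z'" using Z' Z(2) AX by blast
    then have "x \<in> Z'" using xZ Z'(1) by blast
    then show ?thesis using Z' xX by blast
  qed
  ultimately show ?thesis unfolding zclosure_def by blast
qed



lemma h_equiv_map:
  fixes X :: "(complex^'n) set set" and S :: "(complex^'m) set set"
    and p :: "(complex^'n) set \<Rightarrow> (complex^'m) set"
  assumes mor: "qp_morphism X S p" and XP: "X \<subseteq> proj_space" and SP: "S \<subseteq> proj_space"
    and h: "h_equiv X x y"
  shows "h_equiv S (p x) (p y)"
proof -
  obtain fs where fs: "fs \<noteq> []" "\<forall>f\<in>set fs. holo_curve X f"
    "x \<in> zclosure X (range (hd fs))" "y \<in> zclosure X (range (last fs))"
    "\<forall>i. Suc i < length fs \<longrightarrow> zclosure X (range (fs ! i)) \<inter> zclosure X (range (fs ! Suc i)) \<noteq> {}"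
    using h unfolding h_equiv_def by blast
  have rX: "range f \<subseteq> X" if "f \<in> set fs" for f using fs(2) that unfolding holo_curve_def by blast
  have zm: "p z \<in> zclosure S (range (p \<circ> f))" if "f \<in> set fs" "z \<in> zclosure X (range f)" for f z
    using zclosure_map[OF mor XP SP rX[OF that(1)] that(2)] by (simp add: image_comp)
  define gs where "gs = map (\<lambda>f. p \<circ> f) fs"
  have "gs \<noteq> []" using fs(1) unfolding gs_def by simp
  moreover have "\<forall>g\<in>set gs. holo_curve S g" unfolding gs_def using holo_image[OF mor XP] fs(2) by auto
  moreover have "p x \<in> zclosure S (range (hd gs))"
    unfolding gs_def using zm[OF _ fs(3)] fs(1) by (simp add: hd_map)
  moreover have "p y \<in> zclosure S (range (last gs))"
    unfolding gs_def using zm[OF _ fs(4)] fs(1) by (simp add: last_map)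
  moreover have "\<forall>i. Suc i < length gs \<longrightarrow> zclosure S (range (gs ! i)) \<inter> zclosure S (range (gs ! Suc i)) \<noteq> {}"
  proof (intro allI impI)
    fix i assume i: "Suc i < length gs"
    then have i': "Suc i < length fs" unfolding gs_def by simp
    then obtain z where z: "z \<in> zclosure X (range (fs ! i))" "z \<in> zclosure X (range (fs ! Suc i))"
      using fs(5) by blast
    have "p z \<in> zclosure S (range (gs ! i))" using zm[OF _ z(1)] i' unfolding gs_def by simp
    moreover have "p z \<in> zclosure S (range (gs ! Suc i))" using zm[OF _ z(2)] i' unfolding gs_def by simp
    ultimately show "zclosure S (range (gs ! i)) \<inter> zclosure S (range (gs ! Suc i)) \<noteq> {}" by blast
  qed
  ultimately show ?thesis unfolding h_equiv_def by blast
qed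



theorem lemma4p3:
  fixes X :: "(complex^'n) set set" and S :: "(complex^'m) set set"
    and p :: "(complex^'n) set \<Rightarrow> (complex^'m) set"
  assumes "qp_variety X" and "h_special X"
    and "qp_variety S" and "qp_morphism X S p" and "dominant X S p"
  shows "h_special S"
  unfolding h_special_def
proof (intro allI impI)
  fix Z assume Z: "zariski_closed2 Z \<and> {(x, y). x \<in> S \<and> y \<in> S \<and> h_equiv S x y} \<subseteq> Z"
  note mor = assms(4)
  have Zc: "zariski_closed2 Z" and Zs: "{(x, y). x \<in> S \<and> y \<in> S \<and> h_equiv S x y} \<subseteq> Z" using Z by auto
  have XP: "X \<subseteq> proj_space" using assms(1) qp_proj unfolding qp_variety_def by blast
  have SP: "S \<subseteq> proj_space" using assms(3) qp_proj unfolding qp_variety_def by blast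
  have pS: "\<And>x. x \<in> X \<Longrightarrow> p x \<in> S" using mor unfolding qp_morphism_def by blast
  obtain Z'' where Z'': "zariski_closed2 Z''" "\<forall>P\<in>X. \<forall>Q\<in>X. (P, Q) \<in> Z'' \<longleftrightarrow> (p P, p Q) \<in> Z"
    using preimage2[OF mor XP SP Zc] by blast
  have "{(x, y). x \<in> X \<and> y \<in> X \<and> h_equiv X x y} \<subseteq> Z''"
  proof clarify
    fix x y assume xy: "x \<in> X" "y \<in> X" "h_equiv X x y"
    have "h_equiv S (p x) (p y)" using h_equiv_map[OF mor XP SP xy(3)] .
    then have "(p x, p y) \<in> Z" using pS[OF xy(1)] pS[OF xy(2)] Zs by blast
    then show "(x, y) \<in> Z''" using Z'' xy by blast
  qed
  then have "X \<times> X \<subseteq> Z''" using assms(2) Z''(1) unfolding h_special_def by blast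
  then have XX: "\<forall>P\<in>X. \<forall>Q\<in>X. (p P, p Q) \<in> Z" using Z'' by blast
  have step1: "\<forall>Q\<in>X. \<forall>P\<in>S. (P, p Q) \<in> Z"
  proof (intro ballI)
    fix Q P assume Q: "Q \<in> X" and P: "P \<in> S"
    have "zariski_closed {P \<in> proj_space. (P, p Q) \<in> Z}" using slice1[OF Zc] pS[OF Q] SP by blast
    moreover have "p ` X \<subseteq> {P \<in> proj_space. (P, p Q) \<in> Z}" using XX Q pS SP by blast
    ultimately have "S \<subseteq> {P \<in> proj_space. (P, p Q) \<in> Z}" using assms(5) unfolding dominant_def by blast
    then show "(P, p Q) \<in> Z" using P by blast
  qed
  have "\<forall>P\<in>S. \<forall>Q\<in>S. (P, Q) \<in> Z"
  proof (intro ballI)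
    fix P Q assume P: "P \<in> S" and Q: "Q \<in> S"
    have "zariski_closed {Q \<in> proj_space. (P, Q) \<in> Z}" using slice2[OF Zc] P SP by blast
    moreover have "p ` X \<subseteq> {Q \<in> proj_space. (P, Q) \<in> Z}" using step1 P pS SP by blast
    ultimately have "S \<subseteq> {Q \<in> proj_space. (P, Q) \<in> Z}" using assms(5) unfolding dominant_def by blast
    then show "(P, Q) \<in> Z" using Q by blast
  qed
  then show "S \<times> S \<subseteq> Z" by blast
qed



end
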